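(* Let $\alpha\in(0,1)$ be irrational, let $\mathcal{L}_\alpha$ be the Sturmian language generated by $\alpha$, and let $q_n=[(n+1)\alpha]$ for $n\ge0$. Let ${\rm S}:\mathcal{L}_\alpha\to\mathbb{N}$ be a homomorphism, and write ${\rm S}_0={\rm S}(0)$, ${\rm S}_1={\rm S}(1)$. Then $${\rm S}(\mathcal{L}_\alpha)=\{({\rm S}_1-{\rm S}_0)q_n+n{\rm S}_0+{\rm S}_0:\ n\ge0\}\ \cup\ \{({\rm S}_1-{\rm S}_0)q_n+n{\rm S}_0+{\rm S}_1:\ n\ge0\}.$$
   Context: $\mathbb{N}=\{1,2,3,\dots\}$ and $[x]$ denotes the integer part (floor) of $x$. For irrational $\alpha\in(0,1)$, the characteristic word $c_\alpha=(c_\alpha(n))_{n\ge0}$ is the infinite word over $\{0,1\}$ with $c_\alpha(n)=[(n+2)\alpha]-[(n+1)\alpha]$. The Sturmian language $\mathcal{L}_\alpha$ is the set of all nonempty finite words occurring as factors (subwords) of $c_\alpha$ (equivalently, of $0c_\alpha$ or of $1c_\alpha$). A homomorphism ${\rm S}:\mathcal{L}_\alpha\to\mathbb{N}$ is a map with ${\rm S}(w_1\cdots w_n)={\rm S}(w_1)+\cdots+{\rm S}(w_n)$, determined by ${\rm S}(0),{\rm S}(1)\in\mathbb{N}$. *)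

theory Defs
  imports Complex_Main
begin

definition char_word :: "real \<Rightarrow> nat \<Rightarrow> nat" where
  "char_word \<alpha> n = nat (\<lfloor>(real n + 2) * \<alpha>\<rfloor> - \<lfloor>(real n + 1) * \<alpha>\<rfloor>)"

definition sturmian_language :: "real \<Rightarrow> nat list set" where
  "sturmian_language \<alpha> =
     {w. w \<noteq> [] \<and> (\<exists>i. \<forall>j<length w. w ! j = char_word \<alpha> (i + j))}"

definition word_hom :: "nat \<Rightarrow> nat \<Rightarrow> nat list \<Rightarrow> nat" where
  "word_hom s0 s1 w = (\<Sum>x\<leftarrow>w. if x = 0 then s0 else s1)"

end

theory Submission
  imports Defs
begin

definition gg :: "real \<Rightarrow> nat \<Rightarrow> int" where
  "gg \<alpha> i = \<lfloor>(real i + 1) * \<alpha>\<rfloor>"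

lemma floor_add_bounds:
  fixes x y :: real
  shows "\<lfloor>x + y\<rfloor> - \<lfloor>x\<rfloor> = \<lfloor>y\<rfloor> \<or> \<lfloor>x + y\<rfloor> - \<lfloor>x\<rfloor> = \<lfloor>y\<rfloor> + 1"
  by (simp add: floor_add)

lemma gg_shift: "gg \<alpha> (i + m) - gg \<alpha> i = \<lfloor>(real i + 1) * \<alpha> + real m * \<alpha>\<rfloor> - \<lfloor>(real i + 1) * \<alpha>\<rfloor>"
  unfolding gg_def by (simp add: algebra_simps)

lemma gg_D: "gg \<alpha> (i + m) - gg \<alpha> i = \<lfloor>real m * \<alpha>\<rfloor> \<or> gg \<alpha> (i + m) - gg \<alpha> i = \<lfloor>real m * \<alpha>\<rfloor> + 1"
  unfolding gg_shift by (rule floor_add_bounds)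

lemma cw_int:
  assumes "0 < \<alpha>"
  shows "int (char_word \<alpha> i) = gg \<alpha> (Suc i) - gg \<alpha> i"
proof -
  have "(real i + 1) * \<alpha> \<le> (real i + 2) * \<alpha>" using assms by (simp add: mult_right_mono)
  hence "\<lfloor>(real i + 1) * \<alpha>\<rfloor> \<le> \<lfloor>(real i + 2) * \<alpha>\<rfloor>" by (rule floor_mono)
  moreover have "real (Suc i) + 1 = real i + 2" by simp
  ultimately show ?thesis unfolding char_word_def gg_def by (simp add: add.commute)
qed

lemma cw01:
  assumes "0 < \<alpha>" "\<alpha> < 1"
  shows "char_word \<alpha> i = 0 \<or> char_word \<alpha> i = 1"
proof -
  have "\<lfloor>\<alpha>\<rfloor> = 0" using assms by (simp add: floor_eq_iff)
  hence "gg \<alpha> (i + 1) - gg \<alpha> i = 0 \<or> gg \<alpha> (i + 1) - gg \<alpha> i = 1"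
    using gg_D[of \<alpha> i 1] by simp
  hence "int (char_word \<alpha> i) = 0 \<or> int (char_word \<alpha> i) = 1"
    using cw_int[OF assms(1), of i] by simp
  thus ?thesis by linarith
qed

lemma hom_val:
  assumes "0 < \<alpha>" "\<alpha> < 1"
  shows "int (word_hom S0 S1 (map (\<lambda>j. char_word \<alpha> (i + j)) [0..<m]))
     = int m * int S0 + (int S1 - int S0) * (gg \<alpha> (i + m) - gg \<alpha> i)"
proof (induction m)
  case 0
  then show ?case by (simp add: word_hom_def)
next
  case (Suc m)
  have e: "int (if char_word \<alpha> (i+m) = 0 then S0 else S1) = int S0 + (int S1 - int S0) * (gg \<alpha> (i + Suc m) - gg \<alpha> (i + m))"
    using cw01[OF assms, of "i+m"] cw_int[OF assms(1), of "i+m"] by auto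
  have "word_hom S0 S1 (map (\<lambda>j. char_word \<alpha> (i + j)) [0..<Suc m])
     = word_hom S0 S1 (map (\<lambda>j. char_word \<alpha> (i + j)) [0..<m]) + (if char_word \<alpha> (i+m) = 0 then S0 else S1)"
    by (simp add: word_hom_def)
  hence "int (word_hom S0 S1 (map (\<lambda>j. char_word \<alpha> (i + j)) [0..<Suc m]))
     = int (word_hom S0 S1 (map (\<lambda>j. char_word \<alpha> (i + j)) [0..<m])) + int (if char_word \<alpha> (i+m) = 0 then S0 else S1)"
    by simp
  also have "\<dots> = int (Suc m) * int S0 + (int S1 - int S0) * (gg \<alpha> (i + Suc m) - gg \<alpha> i)"
    unfolding Suc.IH e by (simp add: algebra_simps)
  finally show ?case .
qed

lemma lang_char:
  "w \<in> sturmian_language \<alpha> \<longleftrightarrow> w \<noteq> [] \<and> (\<exists>i. w = map (\<lambda>j. char_word \<alpha> (i + j)) [0..<length w])"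
proof
  assume "w \<in> sturmian_language \<alpha>"
  then obtain i where ne: "w \<noteq> []" and h: "\<forall>j<length w. w ! j = char_word \<alpha> (i + j)"
    unfolding sturmian_language_def by blast
  have "w = map (\<lambda>j. char_word \<alpha> (i + j)) [0..<length w]"
    by (rule nth_equalityI) (simp_all add: h)
  thus "w \<noteq> [] \<and> (\<exists>i. w = map (\<lambda>j. char_word \<alpha> (i + j)) [0..<length w])" using ne by blast
next
  assume "w \<noteq> [] \<and> (\<exists>i. w = map (\<lambda>j. char_word \<alpha> (i + j)) [0..<length w])"
  then obtain i where ne: "w \<noteq> []" and h: "w = map (\<lambda>j. char_word \<alpha> (i + j)) [0..<length w]" by blast
  have "\<forall>j<length w. w ! j = char_word \<alpha> (i + j)"
  proof (intro allI impI)
    fix j assume "j < length w"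
    hence "map (\<lambda>j. char_word \<alpha> (i + j)) [0..<length w] ! j = char_word \<alpha> (i + j)" by simp
    thus "w ! j = char_word \<alpha> (i + j)" using h by metis
  qed
  thus "w \<in> sturmian_language \<alpha>" unfolding sturmian_language_def using ne by blast
qed

lemma gg0: assumes "0 < \<alpha>" "\<alpha> < 1" shows "gg \<alpha> 0 = 0"
  using assms unfolding gg_def by (simp add: floor_eq_iff)

lemma not_int:
  assumes "\<alpha> \<notin> \<rat>" "m \<ge> 1"
  shows "real m * \<alpha> \<noteq> of_int q"
proof
  assume h: "real m * \<alpha> = of_int q"
  have "\<alpha> = of_int q / real m" using h assms(2) by (simp add: field_simps)
  hence "\<alpha> \<in> \<rat>" by simp
  thus False using assms(1) by simp
qed

lemma exists_low:
  assumes "\<alpha> \<notin> \<rat>" "0 < \<alpha>" "\<alpha> < 1" "m \<ge> 1"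
  shows "\<exists>i. gg \<alpha> (i + m) - gg \<alpha> i = \<lfloor>real m * \<alpha>\<rfloor>"
proof (rule ccontr)
  assume "\<not> ?thesis"
  hence A: "\<And>i. gg \<alpha> (i + m) - gg \<alpha> i = \<lfloor>real m * \<alpha>\<rfloor> + 1" using gg_D by blast
  define q where "q = \<lfloor>real m * \<alpha>\<rfloor>"
  have G: "gg \<alpha> (k * m) = int k * (q + 1)" for k
  proof (induction k)
    case 0 then show ?case using gg0[OF assms(2,3)] by simp
  next
    case (Suc k)
    have "gg \<alpha> (Suc k * m) = gg \<alpha> (k * m + m)" by (simp add: add.commute)
    also have "\<dots> = gg \<alpha> (k*m) + q + 1" using A[of "k*m"] q_def by simp
    finally show ?case using Suc by (simp add: algebra_simps)
  qed
  have qlt: "real m * \<alpha> < of_int q + 1" unfolding q_def by linarith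
  obtain k where k: "\<alpha> < real k * (of_int q + 1 - real m * \<alpha>)"
    using reals_Archimedean3[of "of_int q + 1 - real m * \<alpha>"] qlt by auto
  have h1: "of_int (gg \<alpha> (k*m)) \<le> (real (k*m) + 1) * \<alpha>" unfolding gg_def by (rule of_int_floor_le)
  have h2: "of_int (gg \<alpha> (k*m)) = real k * of_int q + real k" using G[of k] by (simp add: algebra_simps)
  have h3: "(real (k*m) + 1) * \<alpha> = real k * (real m * \<alpha>) + \<alpha>" by (simp add: algebra_simps)
  have h4: "real k * (of_int q + 1 - real m * \<alpha>) = real k * of_int q + real k - real k * (real m * \<alpha>)"
    by (simp add: algebra_simps)
  show False using h1 h2 h3 h4 k by linarith
qed

lemma exists_high:
  assumes "\<alpha> \<notin> \<rat>" "0 < \<alpha>" "\<alpha> < 1" "m \<ge> 1"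
  shows "\<exists>i. gg \<alpha> (i + m) - gg \<alpha> i = \<lfloor>real m * \<alpha>\<rfloor> + 1"
proof (rule ccontr)
  assume "\<not> ?thesis"
  hence A: "\<And>i. gg \<alpha> (i + m) - gg \<alpha> i = \<lfloor>real m * \<alpha>\<rfloor>" using gg_D by blast
  define q where "q = \<lfloor>real m * \<alpha>\<rfloor>"
  have G: "gg \<alpha> (k * m) = int k * q" for k
  proof (induction k)
    case 0 then show ?case using gg0[OF assms(2,3)] by simp
  next
    case (Suc k)
    have "gg \<alpha> (Suc k * m) = gg \<alpha> (k * m + m)" by (simp add: add.commute)
    also have "\<dots> = gg \<alpha> (k*m) + q" using A[of "k*m"] q_def by simp
    finally show ?case using Suc by (simp add: algebra_simps)
  qed
  have "real m * \<alpha> \<noteq> of_int q" using not_int[OF assms(1,4)] .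
  moreover have "of_int q \<le> real m * \<alpha>" unfolding q_def by simp
  ultimately have qlt: "of_int q < real m * \<alpha>" by simp
  obtain k where k: "1 < real k * (real m * \<alpha> - of_int q)"
    using reals_Archimedean3[of "real m * \<alpha> - of_int q"] qlt by auto
  have h1: "(real (k*m) + 1) * \<alpha> < of_int (gg \<alpha> (k*m)) + 1" unfolding gg_def by (rule real_of_int_floor_add_one_gt)
  have h2: "of_int (gg \<alpha> (k*m)) = real k * of_int q" using G[of k] by simp
  have h3: "(real (k*m) + 1) * \<alpha> = real k * (real m * \<alpha>) + \<alpha>" by (simp add: algebra_simps)
  have h4: "real k * (real m * \<alpha> - of_int q) = real k * (real m * \<alpha>) - real k * of_int q"
    by (simp add: algebra_simps)
  show False using h1 h2 h3 h4 k assms(2) by linarith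
qed

theorem theorem3:
  fixes \<alpha> :: real and S0 S1 :: nat
  assumes "\<alpha> \<notin> \<rat>" and "0 < \<alpha>" and "\<alpha> < 1"
    and "S0 \<ge> 1" and "S1 \<ge> 1"
  shows "(\<lambda>w. int (word_hom S0 S1 w)) ` sturmian_language \<alpha> =
           {(int S1 - int S0) * \<lfloor>(real n + 1) * \<alpha>\<rfloor> + int n * int S0 + int S0 | n :: nat. True}
         \<union> {(int S1 - int S0) * \<lfloor>(real n + 1) * \<alpha>\<rfloor> + int n * int S0 + int S1 | n :: nat. True}"
  (is "?L = ?A \<union> ?B")
proof
  show "?L \<subseteq> ?A \<union> ?B"
  proof
    fix v assume "v \<in> ?L"
    then obtain w where w: "w \<in> sturmian_language \<alpha>" and v: "v = int (word_hom S0 S1 w)" by auto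
    from w obtain i where ne: "w \<noteq> []" and we: "w = map (\<lambda>j. char_word \<alpha> (i + j)) [0..<length w]"
      unfolding lang_char by blast
    define n where "n = length w - 1"
    have m: "length w = Suc n" using ne n_def by (cases w) auto
    have we2: "w = map (\<lambda>j. char_word \<alpha> (i + j)) [0..<Suc n]" using we m by simp
    have vv: "v = int (Suc n) * int S0 + (int S1 - int S0) * (gg \<alpha> (i + Suc n) - gg \<alpha> i)"
      unfolding v we2 by (rule hom_val[OF assms(2,3)])
    have rr: "real (Suc n) = real n + 1" by simp
    from gg_D[of \<alpha> i "Suc n"] show "v \<in> ?A \<union> ?B"
    proof
      assume "gg \<alpha> (i + Suc n) - gg \<alpha> i = \<lfloor>real (Suc n) * \<alpha>\<rfloor>"
      hence "v = (int S1 - int S0) * \<lfloor>(real n + 1) * \<alpha>\<rfloor> + int n * int S0 + int S0"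
        using vv rr by (simp add: algebra_simps)
      thus ?thesis by blast
    next
      assume "gg \<alpha> (i + Suc n) - gg \<alpha> i = \<lfloor>real (Suc n) * \<alpha>\<rfloor> + 1"
      hence "v = (int S1 - int S0) * \<lfloor>(real n + 1) * \<alpha>\<rfloor> + int n * int S0 + int S1"
        using vv rr by (simp add: algebra_simps)
      thus ?thesis by blast
    qed
  qed
next
  have mem: "int (Suc n) * int S0 + (int S1 - int S0) * (gg \<alpha> (i + Suc n) - gg \<alpha> i) \<in> ?L" for i n
  proof -
    let ?w = "map (\<lambda>j. char_word \<alpha> (i + j)) [0..<Suc n]"
    have "?w \<in> sturmian_language \<alpha>" unfolding lang_char by auto
    hence "int (word_hom S0 S1 ?w) \<in> ?L" by (rule imageI)
    thus ?thesis unfolding hom_val[OF assms(2,3)] .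
  qed
  have rr: "real (Suc n) = real n + 1" for n by simp
  show "?A \<union> ?B \<subseteq> ?L"
  proof
    fix v assume "v \<in> ?A \<union> ?B"
    then obtain n where "v = (int S1 - int S0) * \<lfloor>(real n + 1) * \<alpha>\<rfloor> + int n * int S0 + int S0
        \<or> v = (int S1 - int S0) * \<lfloor>(real n + 1) * \<alpha>\<rfloor> + int n * int S0 + int S1" by blast
    then show "v \<in> ?L"
    proof
      assume v: "v = (int S1 - int S0) * \<lfloor>(real n + 1) * \<alpha>\<rfloor> + int n * int S0 + int S0"
      obtain i where i: "gg \<alpha> (i + Suc n) - gg \<alpha> i = \<lfloor>real (Suc n) * \<alpha>\<rfloor>"
        using exists_low[OF assms(1,2,3), of "Suc n"] by auto
      have "v = int (Suc n) * int S0 + (int S1 - int S0) * (gg \<alpha> (i + Suc n) - gg \<alpha> i)"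
        using v i rr by (simp add: algebra_simps)
      thus ?thesis using mem by simp
    next
      assume v: "v = (int S1 - int S0) * \<lfloor>(real n + 1) * \<alpha>\<rfloor> + int n * int S0 + int S1"
      obtain i where i: "gg \<alpha> (i + Suc n) - gg \<alpha> i = \<lfloor>real (Suc n) * \<alpha>\<rfloor> + 1"
        using exists_high[OF assms(1,2,3), of "Suc n"] by auto
      have "v = int (Suc n) * int S0 + (int S1 - int S0) * (gg \<alpha> (i + Suc n) - gg \<alpha> i)"
        using v i rr by (simp add: algebra_simps)
      thus ?thesis using mem by simp
    qed
  qed
qed

end
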